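(* Let $d$ be a prime and let $c_0,\dots,c_7\in\mathbb{Z}_d$. The $d$-state first degree cellular automaton with parameters $\langle c_0,\dots,c_7\rangle$ is reversible for every number of cells $n\in\mathbb{N}$ under the null boundary condition if and only if $c_0=c_1=c_2=c_3=0$, at least one of $c_4=0$ or $c_6=0$ holds, and $\gcd(c_5,d)=1$ (i.e. $c_5\neq 0$); $c_7$ may be arbitrary.
   Context: Fix an integer $d\ge 2$ and the state set $S=\mathbb{Z}_d=\{0,1,\dots,d-1\}$. A first degree cellular automaton (FDCA) with parameters $\langle c_0,\dots,c_7\rangle$, $c_i\in\mathbb{Z}_d$, is the one-dimensional 3-neighborhood cellular automaton whose local rule $R:S^3\to S$ is $R(x,y,z)=c_0xyz+c_1xy+c_2xz+c_3yz+c_4x+c_5y+c_6z+c_7 \pmod d$. For $n\in\mathbb{N}$, $n\ge1$, the $n$-cell automaton under the null boundary condition acts on configurations $x=(x_0,\dots,x_{n-1})\in S^n$ by the global map $G_n:S^n\to S^n$, $G_n(x)_i=R(x_{i-1},x_i,x_{i+1})$ for $0\le i\le n-1$, with the convention $x_{-1}=x_n=0$. The automaton is reversible for a given $n$ if $G_n$ is a bijection. *)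

theory Defs
  imports "HOL-Computational_Algebra.Primes"
begin

text \<open>States are the naturals 0..d-1 representing Z_d. The parameter vector
  c0..c7 is a function c :: nat => nat, with c i in Z_d for i < 8.\<close>

definition fdca_rule :: "nat \<Rightarrow> (nat \<Rightarrow> nat) \<Rightarrow> nat \<Rightarrow> nat \<Rightarrow> nat \<Rightarrow> nat" where
  "fdca_rule d c x y z =
     (c 0 * x * y * z + c 1 * x * y + c 2 * x * z + c 3 * y * z
      + c 4 * x + c 5 * y + c 6 * z + c 7) mod d"

definition configs :: "nat \<Rightarrow> nat \<Rightarrow> nat list set" where
  "configs d n = {xs. length xs = n \<and> (\<forall>i<n. xs ! i < d)}"

definition cell :: "nat list \<Rightarrow> int \<Rightarrow> nat" where
  "cell xs i = (if 0 \<le> i \<and> i < int (length xs) then xs ! nat i else 0)"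

definition global_map :: "nat \<Rightarrow> (nat \<Rightarrow> nat) \<Rightarrow> nat list \<Rightarrow> nat list" where
  "global_map d c xs =
     map (\<lambda>i. fdca_rule d c (cell xs (int i - 1)) (cell xs (int i)) (cell xs (int i + 1)))
         [0..<length xs]"

definition reversible :: "nat \<Rightarrow> (nat \<Rightarrow> nat) \<Rightarrow> nat \<Rightarrow> bool" where
  "reversible d c n = bij_betw (global_map d c) (configs d n) (configs d n)"

end

theory Submission
  imports Defs
begin

definition Rg :: "int \<Rightarrow> int \<Rightarrow> int \<Rightarrow> int \<Rightarrow> int \<Rightarrow> int \<Rightarrow> int \<Rightarrow> int \<Rightarrow> int \<Rightarrow> int \<Rightarrow> int \<Rightarrow> int" where
  "Rg c0 c1 c2 c3 c4 c5 c6 c7 x y z = c0*x*y*z + c1*x*y + c2*x*z + c3*y*z + c4*x + c5*y + c6*z + c7"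

abbreviation RC :: "(nat \<Rightarrow> nat) \<Rightarrow> int \<Rightarrow> int \<Rightarrow> int \<Rightarrow> int" where
  "RC c \<equiv> Rg (int (c 0)) (int (c 1)) (int (c 2)) (int (c 3)) (int (c 4)) (int (c 5)) (int (c 6)) (int (c 7))"

definition ext :: "int list \<Rightarrow> int \<Rightarrow> int" where
  "ext X j = (if 0 \<le> j \<and> j < int (length X) then X ! nat j else 0)"

lemma Rg_mod: "Rg c0 c1 c2 c3 c4 c5 c6 c7 (x mod m) (y mod m) (z mod m) mod m = Rg c0 c1 c2 c3 c4 c5 c6 c7 x y z mod m"
  unfolding Rg_def by (intro mod_add_cong mod_mult_cong; simp)

lemma fdca_int: "int (fdca_rule d c a b e) = RC c (int a) (int b) (int e) mod int d"
  unfolding fdca_rule_def Rg_def by (simp add: of_nat_mod)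

lemma collision:
  assumes d: "d \<ge> 2" and len: "length Y = length X"
    and eqs: "\<forall>i<length X. RC c (ext X (int i - 1)) (ext X (int i)) (ext X (int i + 1)) mod int d
                  = RC c (ext Y (int i - 1)) (ext Y (int i)) (ext Y (int i + 1)) mod int d"
    and k: "k < length X" "X!k mod int d \<noteq> Y!k mod int d"
  shows "\<not> reversible d c (length X)"
proof
  assume rev: "reversible d c (length X)"
  define xs where "xs = map (\<lambda>v. nat (v mod int d)) X"
  define ys where "ys = map (\<lambda>v. nat (v mod int d)) Y"
  have dpos: "int d > 0" using d by simp
  have xs_in: "xs \<in> configs d (length X)"
    unfolding configs_def xs_def using dpos by (auto simp: nat_less_iff)
  have ys_in: "ys \<in> configs d (length X)"
    unfolding configs_def ys_def using dpos len by (auto simp: nat_less_iff)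
  have cx: "int (cell xs j) = ext X j mod int d" for j
    unfolding cell_def ext_def xs_def using dpos by auto
  have cy: "int (cell ys j) = ext Y j mod int d" for j
    unfolding cell_def ext_def ys_def using dpos len by auto
  have "global_map d c xs = global_map d c ys"
  proof (rule nth_equalityI)
    show "length (global_map d c xs) = length (global_map d c ys)"
      unfolding global_map_def xs_def ys_def using len by simp
    fix i assume "i < length (global_map d c xs)"
    then have i: "i < length X" unfolding global_map_def xs_def by simp
    have "int (global_map d c xs ! i) = RC c (ext X (int i - 1)) (ext X (int i)) (ext X (int i + 1)) mod int d"
    proof -
      have lx: "length xs = length X" by (simp add: xs_def)
      have "global_map d c xs ! i = fdca_rule d c (cell xs (int i - 1)) (cell xs (int i)) (cell xs (int i + 1))"
        using i lx unfolding global_map_def by simp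
      then show ?thesis by (simp add: fdca_int cx Rg_mod)
    qed
    moreover have "int (global_map d c ys ! i) = RC c (ext Y (int i - 1)) (ext Y (int i)) (ext Y (int i + 1)) mod int d"
    proof -
      have ly: "length ys = length X" using len by (simp add: ys_def)
      have "global_map d c ys ! i = fdca_rule d c (cell ys (int i - 1)) (cell ys (int i)) (cell ys (int i + 1))"
        using i ly unfolding global_map_def by simp
      then show ?thesis by (simp add: fdca_int cy Rg_mod)
    qed
    ultimately show "global_map d c xs ! i = global_map d c ys ! i"
      using eqs i by simp
  qed
  moreover have "xs \<noteq> ys"
  proof
    assume "xs = ys"
    then have "xs ! k = ys ! k" by simp
    then have "nat (X!k mod int d) = nat (Y!k mod int d)" using k len by (simp add: xs_def ys_def)
    moreover have "X!k mod int d \<ge> 0" "Y!k mod int d \<ge> 0" using dpos by auto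
    ultimately have "X!k mod int d = Y!k mod int d" by (metis nat_eq_iff2)
    then show False using k(2) by simp
  qed
  moreover have "inj_on (global_map d c) (configs d (length X))"
    using rev unfolding reversible_def bij_betw_def by simp
  ultimately show False using xs_in ys_in by (meson inj_onD)
qed


lemma coll1:
  assumes "d \<ge> 2" "RC c 0 a0 0 mod int d = RC c 0 b0 0 mod int d"
    "a0 mod int d \<noteq> b0 mod int d"
  shows "\<not> reversible d c 1"
  using collision[of d "[b0]" "[a0]" c 0] assms by (simp add: ext_def)

lemma coll2:
  assumes "d \<ge> 2" "RC c 0 a0 a1 mod int d = RC c 0 b0 b1 mod int d"
    "RC c a0 a1 0 mod int d = RC c b0 b1 0 mod int d"
    "a0 mod int d \<noteq> b0 mod int d \<or> a1 mod int d \<noteq> b1 mod int d"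
  shows "\<not> reversible d c 2"
proof -
  have A: "\<forall>i<length [a0,a1]. RC c (ext [a0,a1] (int i - 1)) (ext [a0,a1] (int i)) (ext [a0,a1] (int i + 1)) mod int d
                  = RC c (ext [b0,b1] (int i - 1)) (ext [b0,b1] (int i)) (ext [b0,b1] (int i + 1)) mod int d"
    using assms by (auto simp: ext_def less_Suc_eq numeral_2_eq_2)
  show ?thesis
  proof (cases "a0 mod int d \<noteq> b0 mod int d")
    case True
    then show ?thesis using collision[OF assms(1) _ A, of 0] by (simp add: numeral_eq_Suc)
  next
    case False
    then show ?thesis using assms(4) collision[OF assms(1) _ A, of 1] by (simp add: numeral_eq_Suc)
  qed
qed

lemma coll3:
  assumes "d \<ge> 2" "RC c 0 a0 a1 mod int d = RC c 0 b0 b1 mod int d"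
    "RC c a0 a1 a2 mod int d = RC c b0 b1 b2 mod int d"
    "RC c a1 a2 0 mod int d = RC c b1 b2 0 mod int d"
    "a1 mod int d \<noteq> b1 mod int d"
  shows "\<not> reversible d c 3"
proof -
  have A: "\<forall>i<length [a0,a1,a2]. RC c (ext [a0,a1,a2] (int i - 1)) (ext [a0,a1,a2] (int i)) (ext [a0,a1,a2] (int i + 1)) mod int d
                  = RC c (ext [b0,b1,b2] (int i - 1)) (ext [b0,b1,b2] (int i)) (ext [b0,b1,b2] (int i + 1)) mod int d"
    using assms by (auto simp: ext_def less_Suc_eq numeral_3_eq_3)
  show ?thesis using assms(5) collision[OF assms(1) _ A, of 1] by (simp add: numeral_eq_Suc)
qed

lemma coll4:
  assumes "d \<ge> 2" "RC c 0 a0 a1 mod int d = RC c 0 b0 b1 mod int d"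
    "RC c a0 a1 a2 mod int d = RC c b0 b1 b2 mod int d"
    "RC c a1 a2 a3 mod int d = RC c b1 b2 b3 mod int d"
    "RC c a2 a3 0 mod int d = RC c b2 b3 0 mod int d"
    "a1 mod int d \<noteq> b1 mod int d"
  shows "\<not> reversible d c 4"
proof -
  have A: "\<forall>i<length [a0,a1,a2,a3]. RC c (ext [a0,a1,a2,a3] (int i - 1)) (ext [a0,a1,a2,a3] (int i)) (ext [a0,a1,a2,a3] (int i + 1)) mod int d
                  = RC c (ext [b0,b1,b2,b3] (int i - 1)) (ext [b0,b1,b2,b3] (int i)) (ext [b0,b1,b2,b3] (int i + 1)) mod int d"
    using assms by (auto simp: ext_def less_Suc_eq numeral_eq_Suc)
  show ?thesis using assms(6) collision[OF assms(1) _ A, of 1] by (simp add: numeral_eq_Suc)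
qed

lemma inv_ex:
  fixes p k :: int
  assumes "prime p" "\<not> p dvd k"
  shows "\<exists>i. p dvd k * i - 1"
proof -
  have "coprime p k" using assms by (simp add: prime_imp_coprime)
  then have "gcd k p = 1" by (simp add: coprime_iff_gcd_eq_1 gcd.commute)
  then obtain u v where "u * k + v * p = 1" using bezout_int[of k p] by auto
  then have "k * u - 1 = p * (- v)" by (simp add: algebra_simps)
  then show ?thesis by (metis dvdI)
qed

lemma case_2a:
  fixes d :: nat and c :: "nat \<Rightarrow> nat" and i0 i1 i2 i3 i4 i5 i6 iK :: int
  assumes d: "d \<ge> 2"
    and h: "int d dvd ((-1) + int (c 3)*i3)" "int d dvd (int (c 4) + (-1)*int (c 1)*int (c 5)*i3)"
    and nd: "(0) mod int d \<noteq> (((1))) mod int d \<or> (((-1)*int (c 5)*i3)) mod int d \<noteq> (((-1)*int (c 5)*i3)) mod int d"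
  shows "\<not> reversible d c 2"
proof -
  have e0: "RC c (0) (0) (((-1)*int (c 5)*i3)) - RC c (0) (((1))) (((-1)*int (c 5)*i3)) = (int (c 5)) * ((-1) + int (c 3)*i3)"
    unfolding Rg_def by algebra
  have "int d dvd (int (c 5)) * ((-1) + int (c 3)*i3)" by (rule dvd_mult[OF h(1)])
  then have f0: "RC c (0) (0) (((-1)*int (c 5)*i3)) mod int d = RC c (0) (((1))) (((-1)*int (c 5)*i3)) mod int d" using e0 by (simp add: mod_eq_dvd_iff)
  have e1: "RC c (0) (((-1)*int (c 5)*i3)) (0) - RC c (((1))) (((-1)*int (c 5)*i3)) (0) = ((-1)) * (int (c 4) + (-1)*int (c 1)*int (c 5)*i3)"
    unfolding Rg_def by algebra
  have "int d dvd ((-1)) * (int (c 4) + (-1)*int (c 1)*int (c 5)*i3)" by (rule dvd_mult[OF h(2)])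
  then have f1: "RC c (0) (((-1)*int (c 5)*i3)) (0) mod int d = RC c (((1))) (((-1)*int (c 5)*i3)) (0) mod int d" using e1 by (simp add: mod_eq_dvd_iff)
  show ?thesis by (rule coll2[OF d f0 f1 nd])
qed

lemma case_2b:
  fixes d :: nat and c :: "nat \<Rightarrow> nat" and i0 i1 i2 i3 i4 i5 i6 iK :: int
  assumes d: "d \<ge> 2"
    and h: "int d dvd ((-1) + int (c 3)*i3)" "int d dvd ((-1) + int (c 5)*i5)" "int d dvd ((-1) + int (c 4)*iK + (-1)*int (c 1)*int (c 5)*i3*iK)"
    and nd: "(((-1)*int (c 5)*int (c 6)*i3*i5)) mod int d \<noteq> ((int (c 5)^2*i3*iK + (-1)*int (c 4)*int (c 5)*int (c 6)*i3*i5*iK)) mod int d \<or> (0) mod int d \<noteq> (((-1)*int (c 5)*i3)) mod int d"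
  shows "\<not> reversible d c 2"
proof -
  have e0: "RC c (0) (((-1)*int (c 5)*int (c 6)*i3*i5)) (0) - RC c (0) ((int (c 5)^2*i3*iK + (-1)*int (c 4)*int (c 5)*int (c 6)*i3*i5*iK)) (((-1)*int (c 5)*i3)) = (int (c 5)^3*i3*iK + (-1)*int (c 4)*int (c 5)^2*int (c 6)*i3*i5*iK) * ((-1) + int (c 3)*i3) + ((-1)*int (c 5)*int (c 6)*i3) * ((-1) + int (c 5)*i5)"
    unfolding Rg_def by algebra
  have "int d dvd (int (c 5)^3*i3*iK + (-1)*int (c 4)*int (c 5)^2*int (c 6)*i3*i5*iK) * ((-1) + int (c 3)*i3) + ((-1)*int (c 5)*int (c 6)*i3) * ((-1) + int (c 5)*i5)" by (rule dvd_add[OF dvd_mult[OF h(1)] dvd_mult[OF h(2)]])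
  then have f0: "RC c (0) (((-1)*int (c 5)*int (c 6)*i3*i5)) (0) mod int d = RC c (0) ((int (c 5)^2*i3*iK + (-1)*int (c 4)*int (c 5)*int (c 6)*i3*i5*iK)) (((-1)*int (c 5)*i3)) mod int d" using e0 by (simp add: mod_eq_dvd_iff)
  have e1: "RC c (((-1)*int (c 5)*int (c 6)*i3*i5)) (0) (0) - RC c ((int (c 5)^2*i3*iK + (-1)*int (c 4)*int (c 5)*int (c 6)*i3*i5*iK)) (((-1)*int (c 5)*i3)) (0) = ((-1)*int (c 4)*int (c 6)*i3 + int (c 4)^2*int (c 6)*i3*iK + (-1)*int (c 1)*int (c 4)*int (c 5)*int (c 6)*i3^2*iK) * ((-1) + int (c 5)*i5) + ((-1)*int (c 5)^2*i3 + int (c 4)*int (c 6)*i3) * ((-1) + int (c 4)*iK + (-1)*int (c 1)*int (c 5)*i3*iK)"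
    unfolding Rg_def by algebra
  have "int d dvd ((-1)*int (c 4)*int (c 6)*i3 + int (c 4)^2*int (c 6)*i3*iK + (-1)*int (c 1)*int (c 4)*int (c 5)*int (c 6)*i3^2*iK) * ((-1) + int (c 5)*i5) + ((-1)*int (c 5)^2*i3 + int (c 4)*int (c 6)*i3) * ((-1) + int (c 4)*iK + (-1)*int (c 1)*int (c 5)*i3*iK)" by (rule dvd_add[OF dvd_mult[OF h(2)] dvd_mult[OF h(3)]])
  then have f1: "RC c (((-1)*int (c 5)*int (c 6)*i3*i5)) (0) (0) mod int d = RC c ((int (c 5)^2*i3*iK + (-1)*int (c 4)*int (c 5)*int (c 6)*i3*i5*iK)) (((-1)*int (c 5)*i3)) (0) mod int d" using e1 by (simp add: mod_eq_dvd_iff)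
  show ?thesis by (rule coll2[OF d f0 f1 nd])
qed

lemma case_3a:
  fixes d :: nat and c :: "nat \<Rightarrow> nat" and i0 i1 i2 i3 i4 i5 i6 iK :: int
  assumes d: "d \<ge> 2"
    and z: "c 3 = 0" "c 6 = 0"
    and h: "int d dvd ((-1) + int (c 1)*i1)"
    and nd: "(((-1)*int (c 5)*i1)) mod int d \<noteq> (((-1)*int (c 5)*i1)) mod int d \<or> (0) mod int d \<noteq> (((1))) mod int d"
  shows "\<not> reversible d c 2"
proof -
  have zz: "int (c 3) = 0" "int (c 6) = 0" using z by simp_all
  have e0: "RC c (0) (((-1)*int (c 5)*i1)) (0) - RC c (0) (((-1)*int (c 5)*i1)) (((1))) = 0"
    unfolding Rg_def zz by algebra
  have "int d dvd 0" by simp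
  then have f0: "RC c (0) (((-1)*int (c 5)*i1)) (0) mod int d = RC c (0) (((-1)*int (c 5)*i1)) (((1))) mod int d" using e0 by (simp add: mod_eq_dvd_iff)
  have e1: "RC c (((-1)*int (c 5)*i1)) (0) (0) - RC c (((-1)*int (c 5)*i1)) (((1))) (0) = (int (c 5)) * ((-1) + int (c 1)*i1)"
    unfolding Rg_def zz by algebra
  have "int d dvd (int (c 5)) * ((-1) + int (c 1)*i1)" by (rule dvd_mult[OF h(1)])
  then have f1: "RC c (((-1)*int (c 5)*i1)) (0) (0) mod int d = RC c (((-1)*int (c 5)*i1)) (((1))) (0) mod int d" using e1 by (simp add: mod_eq_dvd_iff)
  show ?thesis by (rule coll2[OF d f0 f1 nd])
qed

lemma case_3b:
  fixes d :: nat and c :: "nat \<Rightarrow> nat" and i0 i1 i2 i3 i4 i5 i6 iK :: int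
  assumes d: "d \<ge> 2"
    and z: "c 3 = 0"
    and h: "int d dvd ((-1) + int (c 1)*i1)" "int d dvd ((-1) + int (c 5)*i5)" "int d dvd ((-1) + int (c 6)*i6)"
    and nd: "(0) mod int d \<noteq> (((-1)*int (c 5)*i1)) mod int d \<or> (((-1)*int (c 4)*int (c 5)*i1*i5)) mod int d \<noteq> ((int (c 5)^2*i1*i6 + (-1)*int (c 4)*int (c 5)*int (c 6)*i1*i5*i6)) mod int d"
  shows "\<not> reversible d c 2"
proof -
  have zz: "int (c 3) = 0" using z by simp_all
  have e0: "RC c (0) (0) (((-1)*int (c 4)*int (c 5)*i1*i5)) - RC c (0) (((-1)*int (c 5)*i1)) ((int (c 5)^2*i1*i6 + (-1)*int (c 4)*int (c 5)*int (c 6)*i1*i5*i6)) = ((-1)*int (c 4)*int (c 6)*i1 + int (c 4)*int (c 6)^2*i1*i6) * ((-1) + int (c 5)*i5) + ((-1)*int (c 5)^2*i1 + int (c 4)*int (c 6)*i1) * ((-1) + int (c 6)*i6)"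
    unfolding Rg_def zz by algebra
  have "int d dvd ((-1)*int (c 4)*int (c 6)*i1 + int (c 4)*int (c 6)^2*i1*i6) * ((-1) + int (c 5)*i5) + ((-1)*int (c 5)^2*i1 + int (c 4)*int (c 6)*i1) * ((-1) + int (c 6)*i6)" by (rule dvd_add[OF dvd_mult[OF h(2)] dvd_mult[OF h(3)]])
  then have f0: "RC c (0) (0) (((-1)*int (c 4)*int (c 5)*i1*i5)) mod int d = RC c (0) (((-1)*int (c 5)*i1)) ((int (c 5)^2*i1*i6 + (-1)*int (c 4)*int (c 5)*int (c 6)*i1*i5*i6)) mod int d" using e0 by (simp add: mod_eq_dvd_iff)
  have e1: "RC c (0) (((-1)*int (c 4)*int (c 5)*i1*i5)) (0) - RC c (((-1)*int (c 5)*i1)) ((int (c 5)^2*i1*i6 + (-1)*int (c 4)*int (c 5)*int (c 6)*i1*i5*i6)) (0) = (int (c 5)^3*i1*i6 + (-1)*int (c 4)*int (c 5)^2*int (c 6)*i1*i5*i6) * ((-1) + int (c 1)*i1) + ((-1)*int (c 4)*int (c 5)*i1) * ((-1) + int (c 5)*i5)"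
    unfolding Rg_def zz by algebra
  have "int d dvd (int (c 5)^3*i1*i6 + (-1)*int (c 4)*int (c 5)^2*int (c 6)*i1*i5*i6) * ((-1) + int (c 1)*i1) + ((-1)*int (c 4)*int (c 5)*i1) * ((-1) + int (c 5)*i5)" by (rule dvd_add[OF dvd_mult[OF h(1)] dvd_mult[OF h(2)]])
  then have f1: "RC c (0) (((-1)*int (c 4)*int (c 5)*i1*i5)) (0) mod int d = RC c (((-1)*int (c 5)*i1)) ((int (c 5)^2*i1*i6 + (-1)*int (c 4)*int (c 5)*int (c 6)*i1*i5*i6)) (0) mod int d" using e1 by (simp add: mod_eq_dvd_iff)
  show ?thesis by (rule coll2[OF d f0 f1 nd])
qed

lemma case_4a:
  fixes d :: nat and c :: "nat \<Rightarrow> nat" and i0 i1 i2 i3 i4 i5 i6 iK :: int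
  assumes d: "d \<ge> 2"
    and z: "c 1 = 0" "c 3 = 0"
    and h: "int d dvd ((-1) + int (c 0)*i0)" "int d dvd ((-1) + int (c 4)*i4)" "int d dvd ((-1) + int (c 5)*i5)" "int d dvd ((-1) + int (c 6)*i6)"
    and nd: "(((-1)*int (c 5)^3*i0*i4*i6 + (2)*int (c 4)*int (c 5)^2*int (c 6)*i0*i4*i5*i6 + (-1)*int (c 2)*i0 + (-1)*int (c 0)*int (c 4)*int (c 5)^2*int (c 6)*i0*i4*i5^2*i6)) mod int d \<noteq> (((1) + (-1)*int (c 5)^3*i0*i4*i6 + (2)*int (c 4)*int (c 5)^2*int (c 6)*i0*i4*i5*i6 + (-1)*int (c 2)*i0 + (-1)*int (c 0)*int (c 4)*int (c 5)^2*int (c 6)*i0*i4*i5^2*i6)) mod int d"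
  shows "\<not> reversible d c 3"
proof -
  have zz: "int (c 1) = 0" "int (c 3) = 0" using z by simp_all
  have e0: "RC c (0) (0) (((-1)*int (c 5)^3*i0*i4*i6 + (2)*int (c 4)*int (c 5)^2*int (c 6)*i0*i4*i5*i6 + (-1)*int (c 2)*i0 + (-1)*int (c 0)*int (c 4)*int (c 5)^2*int (c 6)*i0*i4*i5^2*i6)) - RC c (0) (((-1)*int (c 6)*i5)) (((1) + (-1)*int (c 5)^3*i0*i4*i6 + (2)*int (c 4)*int (c 5)^2*int (c 6)*i0*i4*i5*i6 + (-1)*int (c 2)*i0 + (-1)*int (c 0)*int (c 4)*int (c 5)^2*int (c 6)*i0*i4*i5^2*i6)) = (int (c 6)) * ((-1) + int (c 5)*i5)"
    unfolding Rg_def zz by algebra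
  have "int d dvd (int (c 6)) * ((-1) + int (c 5)*i5)" by (rule dvd_mult[OF h(3)])
  then have f0: "RC c (0) (0) (((-1)*int (c 5)^3*i0*i4*i6 + (2)*int (c 4)*int (c 5)^2*int (c 6)*i0*i4*i5*i6 + (-1)*int (c 2)*i0 + (-1)*int (c 0)*int (c 4)*int (c 5)^2*int (c 6)*i0*i4*i5^2*i6)) mod int d = RC c (0) (((-1)*int (c 6)*i5)) (((1) + (-1)*int (c 5)^3*i0*i4*i6 + (2)*int (c 4)*int (c 5)^2*int (c 6)*i0*i4*i5*i6 + (-1)*int (c 2)*i0 + (-1)*int (c 0)*int (c 4)*int (c 5)^2*int (c 6)*i0*i4*i5^2*i6)) mod int d" using e0 by (simp add: mod_eq_dvd_iff)
  have e1: "RC c (0) (((-1)*int (c 5)^3*i0*i4*i6 + (2)*int (c 4)*int (c 5)^2*int (c 6)*i0*i4*i5*i6 + (-1)*int (c 2)*i0 + (-1)*int (c 0)*int (c 4)*int (c 5)^2*int (c 6)*i0*i4*i5^2*i6)) (0) - RC c (((-1)*int (c 6)*i5)) (((1) + (-1)*int (c 5)^3*i0*i4*i6 + (2)*int (c 4)*int (c 5)^2*int (c 6)*i0*i4*i5*i6 + (-1)*int (c 2)*i0 + (-1)*int (c 0)*int (c 4)*int (c 5)^2*int (c 6)*i0*i4*i5^2*i6)) (((-1)*int (c 4)*i5)) = (int (c 4)*int (c 5)^3*int (c 6)*i4*i5^2*i6 + (-2)*int (c 4)^2*int (c 5)^2*int (c 6)^2*i4*i5^3*i6 + int (c 2)*int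 (c 4)*int (c 6)*i5^2 + int (c 0)*int (c 4)^2*int (c 5)^2*int (c 6)^2*i4*i5^4*i6) * ((-1) + int (c 0)*i0) + (int (c 5)^3*int (c 6)*i5^2*i6 + (-2)*int (c 4)*int (c 5)^2*int (c 6)^2*i5^3*i6 + int (c 0)*int (c 4)*int (c 5)^2*int (c 6)^2*i5^4*i6) * ((-1) + int (c 4)*i4) + (int (c 5)*int (c 6)*i6 + int (c 5)^2*int (c 6)*i5*i6 + (-2)*int (c 4)*int (c 6)^2*i5*i6 + (-2)*int (c 4)*int (c 5)*int (c 6)^2*i5^2*i6 + int (c 0)*int (c 4)*int (c 6)^2*i5^2*i6 + int (c 0)*int (c 4)*int (c 5)*int (c 6)^2*i5^3*i6) * ((-1) + int (c 5)*i5) + (int (c 5) + (-2)*int (c 4)*int (c 6)*i5 + int (c 0)*int (c 4)*int (c 6)*i5^2) * ((-1) + int (c 6)*i6)"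
    unfolding Rg_def zz by algebra
  have "int d dvd (int (c 4)*int (c 5)^3*int (c 6)*i4*i5^2*i6 + (-2)*int (c 4)^2*int (c 5)^2*int (c 6)^2*i4*i5^3*i6 + int (c 2)*int (c 4)*int (c 6)*i5^2 + int (c 0)*int (c 4)^2*int (c 5)^2*int (c 6)^2*i4*i5^4*i6) * ((-1) + int (c 0)*i0) + (int (c 5)^3*int (c 6)*i5^2*i6 + (-2)*int (c 4)*int (c 5)^2*int (c 6)^2*i5^3*i6 + int (c 0)*int (c 4)*int (c 5)^2*int (c 6)^2*i5^4*i6) * ((-1) + int (c 4)*i4) + (int (c 5)*int (c 6)*i6 + int (c 5)^2*int (c 6)*i5*i6 + (-2)*int (c 4)*int (c 6)^2*i5*i6 + (-2)*int (c 4)*int (c 5)*int (c 6)^2*i5^2*i6 + int (c 0)*int (c 4)*int (c 6)^2*i5^2*i6 + int (c 0)*int (c 4)*int (c 5)*int (c 6)^2*i5^3*i6) * ((-1) + int (c 5)*i5) + (int (c 5) + (-2)*int (c 4)*int (c 6)*i5 + int (c 0)*int (c 4)*int (c 6)*i5^2) * ((-1) + int (c 6)*i6)" by (rule dvd_add[OF dvd_add[OF dvd_add[OF dvd_mult[OF h(1)] dvd_mult[OF h(2)]] dvd_mult[OF h(3)]] dvd_mult[OF h(4)]])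
  then have f1: "RC c (0) (((-1)*int (c 5)^3*i0*i4*i6 + (2)*int (c 4)*int (c 5)^2*int (c 6)*i0*i4*i5*i6 + (-1)*int (c 2)*i0 + (-1)*int (c 0)*int (c 4)*int (c 5)^2*int (c 6)*i0*i4*i5^2*i6)) (0) mod int d = RC c (((-1)*int (c 6)*i5)) (((1) + (-1)*int (c 5)^3*i0*i4*i6 + (2)*int (c 4)*int (c 5)^2*int (c 6)*i0*i4*i5*i6 + (-1)*int (c 2)*i0 + (-1)*int (c 0)*int (c 4)*int (c 5)^2*int (c 6)*i0*i4*i5^2*i6)) (((-1)*int (c 4)*i5)) mod int d" using e1 by (simp add: mod_eq_dvd_iff)
  have e2: "RC c (((-1)*int (c 5)^3*i0*i4*i6 + (2)*int (c 4)*int (c 5)^2*int (c 6)*i0*i4*i5*i6 + (-1)*int (c 2)*i0 + (-1)*int (c 0)*int (c 4)*int (c 5)^2*int (c 6)*i0*i4*i5^2*i6)) (0) (0) - RC c (((1) + (-1)*int (c 5)^3*i0*i4*i6 + (2)*int (c 4)*int (c 5)^2*int (c 6)*i0*i4*i5*i6 + (-1)*int (c 2)*i0 + (-1)*int (c 0)*int (c 4)*int (c 5)^2*int (c 6)*i0*i4*i5^2*i6)) (((-1)*int (c 4)*i5)) (0) = (int (c 4)) * ((-1) + int (c 5)*i5)"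
    unfolding Rg_def zz by algebra
  have "int d dvd (int (c 4)) * ((-1) + int (c 5)*i5)" by (rule dvd_mult[OF h(3)])
  then have f2: "RC c (((-1)*int (c 5)^3*i0*i4*i6 + (2)*int (c 4)*int (c 5)^2*int (c 6)*i0*i4*i5*i6 + (-1)*int (c 2)*i0 + (-1)*int (c 0)*int (c 4)*int (c 5)^2*int (c 6)*i0*i4*i5^2*i6)) (0) (0) mod int d = RC c (((1) + (-1)*int (c 5)^3*i0*i4*i6 + (2)*int (c 4)*int (c 5)^2*int (c 6)*i0*i4*i5*i6 + (-1)*int (c 2)*i0 + (-1)*int (c 0)*int (c 4)*int (c 5)^2*int (c 6)*i0*i4*i5^2*i6)) (((-1)*int (c 4)*i5)) (0) mod int d" using e2 by (simp add: mod_eq_dvd_iff)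
  show ?thesis by (rule coll3[OF d f0 f1 f2 nd])
qed

lemma case_4b:
  fixes d :: nat and c :: "nat \<Rightarrow> nat" and i0 i1 i2 i3 i4 i5 i6 iK :: int
  assumes d: "d \<ge> 2"
    and z: "c 1 = 0" "c 3 = 0" "c 4 = 0"
    and h: "int d dvd ((-1) + int (c 0)*i0)" "int d dvd ((-1) + int (c 5)*i5)"
    and nd: "(((-1)*int (c 2)*i0 + (-1)*int (c 0)*i0)) mod int d \<noteq> (((1) + (-1)*int (c 2)*i0 + (-1)*int (c 0)*i0)) mod int d"
  shows "\<not> reversible d c 3"
proof -
  have zz: "int (c 1) = 0" "int (c 3) = 0" "int (c 4) = 0" using z by simp_all
  have e0: "RC c (0) (((-1)*int (c 5)*i0)) (((-1)*int (c 2)*i0 + (-1)*int (c 0)*i0)) - RC c (0) (((-1)*int (c 6)*i5 + (-1)*int (c 5)*i0)) (((1) + (-1)*int (c 2)*i0 + (-1)*int (c 0)*i0)) = (int (c 6)) * ((-1) + int (c 5)*i5)"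
    unfolding Rg_def zz by algebra
  have "int d dvd (int (c 6)) * ((-1) + int (c 5)*i5)" by (rule dvd_mult[OF h(2)])
  then have f0: "RC c (0) (((-1)*int (c 5)*i0)) (((-1)*int (c 2)*i0 + (-1)*int (c 0)*i0)) mod int d = RC c (0) (((-1)*int (c 6)*i5 + (-1)*int (c 5)*i0)) (((1) + (-1)*int (c 2)*i0 + (-1)*int (c 0)*i0)) mod int d" using e0 by (simp add: mod_eq_dvd_iff)
  have e1: "RC c (((-1)*int (c 5)*i0)) (((-1)*int (c 2)*i0 + (-1)*int (c 0)*i0)) (((1))) - RC c (((-1)*int (c 6)*i5 + (-1)*int (c 5)*i0)) (((1) + (-1)*int (c 2)*i0 + (-1)*int (c 0)*i0)) (((1))) = (int (c 5) + (-1)*int (c 2)*int (c 6)*i5 + (-1)*int (c 0)*int (c 6)*i5) * ((-1) + int (c 0)*i0)"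
    unfolding Rg_def zz by algebra
  have "int d dvd (int (c 5) + (-1)*int (c 2)*int (c 6)*i5 + (-1)*int (c 0)*int (c 6)*i5) * ((-1) + int (c 0)*i0)" by (rule dvd_mult[OF h(1)])
  then have f1: "RC c (((-1)*int (c 5)*i0)) (((-1)*int (c 2)*i0 + (-1)*int (c 0)*i0)) (((1))) mod int d = RC c (((-1)*int (c 6)*i5 + (-1)*int (c 5)*i0)) (((1) + (-1)*int (c 2)*i0 + (-1)*int (c 0)*i0)) (((1))) mod int d" using e1 by (simp add: mod_eq_dvd_iff)
  have e2: "RC c (((-1)*int (c 2)*i0 + (-1)*int (c 0)*i0)) (((1))) (0) - RC c (((1) + (-1)*int (c 2)*i0 + (-1)*int (c 0)*i0)) (((1))) (0) = 0"
    unfolding Rg_def zz by algebra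
  have "int d dvd 0" by simp
  then have f2: "RC c (((-1)*int (c 2)*i0 + (-1)*int (c 0)*i0)) (((1))) (0) mod int d = RC c (((1) + (-1)*int (c 2)*i0 + (-1)*int (c 0)*i0)) (((1))) (0) mod int d" using e2 by (simp add: mod_eq_dvd_iff)
  show ?thesis by (rule coll3[OF d f0 f1 f2 nd])
qed

lemma case_4c:
  fixes d :: nat and c :: "nat \<Rightarrow> nat" and i0 i1 i2 i3 i4 i5 i6 iK :: int
  assumes d: "d \<ge> 2"
    and z: "c 1 = 0" "c 3 = 0" "c 6 = 0"
    and h: "int d dvd ((-1) + int (c 0)*i0)" "int d dvd ((-1) + int (c 5)*i5)"
    and nd: "(((-1)*int (c 2)*i0 + (-1)*int (c 0)*i0)) mod int d \<noteq> (((1) + (-1)*int (c 2)*i0 + (-1)*int (c 0)*i0)) mod int d"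
  shows "\<not> reversible d c 3"
proof -
  have zz: "int (c 1) = 0" "int (c 3) = 0" "int (c 6) = 0" using z by simp_all
  have e0: "RC c (0) (((1))) (((-1)*int (c 2)*i0 + (-1)*int (c 0)*i0)) - RC c (0) (((1))) (((1) + (-1)*int (c 2)*i0 + (-1)*int (c 0)*i0)) = 0"
    unfolding Rg_def zz by algebra
  have "int d dvd 0" by simp
  then have f0: "RC c (0) (((1))) (((-1)*int (c 2)*i0 + (-1)*int (c 0)*i0)) mod int d = RC c (0) (((1))) (((1) + (-1)*int (c 2)*i0 + (-1)*int (c 0)*i0)) mod int d" using e0 by (simp add: mod_eq_dvd_iff)
  have e1: "RC c (((1))) (((-1)*int (c 2)*i0 + (-1)*int (c 0)*i0)) (((-1)*int (c 5)*i0)) - RC c (((1))) (((1) + (-1)*int (c 2)*i0 + (-1)*int (c 0)*i0)) (((-1)*int (c 5)*i0 + (-1)*int (c 4)*i5)) = (int (c 5) + (-1)*int (c 2)*int (c 4)*i5 + (-1)*int (c 0)*int (c 4)*i5) * ((-1) + int (c 0)*i0)"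
    unfolding Rg_def zz by algebra
  have "int d dvd (int (c 5) + (-1)*int (c 2)*int (c 4)*i5 + (-1)*int (c 0)*int (c 4)*i5) * ((-1) + int (c 0)*i0)" by (rule dvd_mult[OF h(1)])
  then have f1: "RC c (((1))) (((-1)*int (c 2)*i0 + (-1)*int (c 0)*i0)) (((-1)*int (c 5)*i0)) mod int d = RC c (((1))) (((1) + (-1)*int (c 2)*i0 + (-1)*int (c 0)*i0)) (((-1)*int (c 5)*i0 + (-1)*int (c 4)*i5)) mod int d" using e1 by (simp add: mod_eq_dvd_iff)
  have e2: "RC c (((-1)*int (c 2)*i0 + (-1)*int (c 0)*i0)) (((-1)*int (c 5)*i0)) (0) - RC c (((1) + (-1)*int (c 2)*i0 + (-1)*int (c 0)*i0)) (((-1)*int (c 5)*i0 + (-1)*int (c 4)*i5)) (0) = (int (c 4)) * ((-1) + int (c 5)*i5)"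
    unfolding Rg_def zz by algebra
  have "int d dvd (int (c 4)) * ((-1) + int (c 5)*i5)" by (rule dvd_mult[OF h(2)])
  then have f2: "RC c (((-1)*int (c 2)*i0 + (-1)*int (c 0)*i0)) (((-1)*int (c 5)*i0)) (0) mod int d = RC c (((1) + (-1)*int (c 2)*i0 + (-1)*int (c 0)*i0)) (((-1)*int (c 5)*i0 + (-1)*int (c 4)*i5)) (0) mod int d" using e2 by (simp add: mod_eq_dvd_iff)
  show ?thesis by (rule coll3[OF d f0 f1 f2 nd])
qed

lemma case_5a:
  fixes d :: nat and c :: "nat \<Rightarrow> nat" and i0 i1 i2 i3 i4 i5 i6 iK :: int
  assumes d: "d \<ge> 2"
    and z: "c 0 = 0" "c 1 = 0" "c 3 = 0"
    and h: "int d dvd ((-1) + int (c 2)*i2)" "int d dvd ((-1) + int (c 4)*i4)" "int d dvd ((-1) + int (c 5)*i5)"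
    and nd: "(0) mod int d \<noteq> (((1))) mod int d"
  shows "\<not> reversible d c 3"
proof -
  have zz: "int (c 0) = 0" "int (c 1) = 0" "int (c 3) = 0" using z by simp_all
  have e0: "RC c (0) ((int (c 5)^2*i2*i4 + (-2)*int (c 4)*int (c 5)*int (c 6)*i2*i4*i5 + int (c 2)*int (c 4)*int (c 5)*int (c 6)*i2*i4*i5^2)) (0) - RC c (0) (((-1)*int (c 6)*i5 + int (c 5)^2*i2*i4 + (-2)*int (c 4)*int (c 5)*int (c 6)*i2*i4*i5 + int (c 2)*int (c 4)*int (c 5)*int (c 6)*i2*i4*i5^2)) (((1))) = (int (c 6)) * ((-1) + int (c 5)*i5)"
    unfolding Rg_def zz by algebra
  have "int d dvd (int (c 6)) * ((-1) + int (c 5)*i5)" by (rule dvd_mult[OF h(3)])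
  then have f0: "RC c (0) ((int (c 5)^2*i2*i4 + (-2)*int (c 4)*int (c 5)*int (c 6)*i2*i4*i5 + int (c 2)*int (c 4)*int (c 5)*int (c 6)*i2*i4*i5^2)) (0) mod int d = RC c (0) (((-1)*int (c 6)*i5 + int (c 5)^2*i2*i4 + (-2)*int (c 4)*int (c 5)*int (c 6)*i2*i4*i5 + int (c 2)*int (c 4)*int (c 5)*int (c 6)*i2*i4*i5^2)) (((1))) mod int d" using e0 by (simp add: mod_eq_dvd_iff)
  have e1: "RC c ((int (c 5)^2*i2*i4 + (-2)*int (c 4)*int (c 5)*int (c 6)*i2*i4*i5 + int (c 2)*int (c 4)*int (c 5)*int (c 6)*i2*i4*i5^2)) (0) (0) - RC c (((-1)*int (c 6)*i5 + int (c 5)^2*i2*i4 + (-2)*int (c 4)*int (c 5)*int (c 6)*i2*i4*i5 + int (c 2)*int (c 4)*int (c 5)*int (c 6)*i2*i4*i5^2)) (((1))) (((-1)*int (c 4)*i5)) = (int (c 4)*int (c 5)^2*i4*i5 + (-2)*int (c 4)^2*int (c 5)*int (c 6)*i4*i5^2 + int (c 2)*int (c 4)^2*int (c 5)*int (c 6)*i4*i5^3) * ((-1) + int (c 2)*i2) + (int (c 5)^2*i5 + (-2)*int (c 4)*int (c 5)*int (c 6)*i5^2 + int (c 2)*int (c 4)*int (c 5)*int (c 6)*i5^3) * ((-1) + int (c 4)*i4) + (int (c 5) + (-2)*int (c 4)*int (c 6)*i5 + int (c 2)*int (c 4)*int (c 6)*i5^2) * ((-1) + int (c 5)*i5)"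
    unfolding Rg_def zz by algebra
  have "int d dvd (int (c 4)*int (c 5)^2*i4*i5 + (-2)*int (c 4)^2*int (c 5)*int (c 6)*i4*i5^2 + int (c 2)*int (c 4)^2*int (c 5)*int (c 6)*i4*i5^3) * ((-1) + int (c 2)*i2) + (int (c 5)^2*i5 + (-2)*int (c 4)*int (c 5)*int (c 6)*i5^2 + int (c 2)*int (c 4)*int (c 5)*int (c 6)*i5^3) * ((-1) + int (c 4)*i4) + (int (c 5) + (-2)*int (c 4)*int (c 6)*i5 + int (c 2)*int (c 4)*int (c 6)*i5^2) * ((-1) + int (c 5)*i5)" by (rule dvd_add[OF dvd_add[OF dvd_mult[OF h(1)] dvd_mult[OF h(2)]] dvd_mult[OF h(3)]])
  then have f1: "RC c ((int (c 5)^2*i2*i4 + (-2)*int (c 4)*int (c 5)*int (c 6)*i2*i4*i5 + int (c 2)*int (c 4)*int (c 5)*int (c 6)*i2*i4*i5^2)) (0) (0) mod int d = RC c (((-1)*int (c 6)*i5 + int (c 5)^2*i2*i4 + (-2)*int (c 4)*int (c 5)*int (c 6)*i2*i4*i5 + int (c 2)*int (c 4)*int (c 5)*int (c 6)*i2*i4*i5^2)) (((1))) (((-1)*int (c 4)*i5)) mod int d" using e1 by (simp add: mod_eq_dvd_iff)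
  have e2: "RC c (0) (0) (0) - RC c (((1))) (((-1)*int (c 4)*i5)) (0) = (int (c 4)) * ((-1) + int (c 5)*i5)"
    unfolding Rg_def zz by algebra
  have "int d dvd (int (c 4)) * ((-1) + int (c 5)*i5)" by (rule dvd_mult[OF h(3)])
  then have f2: "RC c (0) (0) (0) mod int d = RC c (((1))) (((-1)*int (c 4)*i5)) (0) mod int d" using e2 by (simp add: mod_eq_dvd_iff)
  show ?thesis by (rule coll3[OF d f0 f1 f2 nd])
qed

lemma case_5b:
  fixes d :: nat and c :: "nat \<Rightarrow> nat" and i0 i1 i2 i3 i4 i5 i6 iK :: int
  assumes d: "d \<ge> 2"
    and z: "c 0 = 0" "c 1 = 0" "c 3 = 0" "c 4 = 0"
    and h: "int d dvd ((-1) + int (c 2)*i2)" "int d dvd ((-1) + int (c 5)*i5)" "int d dvd ((-1) + int (c 6)*i6)"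
    and nd: "(0) mod int d \<noteq> (((1))) mod int d"
  shows "\<not> reversible d c 3"
proof -
  have zz: "int (c 0) = 0" "int (c 1) = 0" "int (c 3) = 0" "int (c 4) = 0" using z by simp_all
  have e0: "RC c (0) (0) (0) - RC c (0) (((-1)*int (c 6)*i5)) (((1))) = (int (c 6)) * ((-1) + int (c 5)*i5)"
    unfolding Rg_def zz by algebra
  have "int d dvd (int (c 6)) * ((-1) + int (c 5)*i5)" by (rule dvd_mult[OF h(2)])
  then have f0: "RC c (0) (0) (0) mod int d = RC c (0) (((-1)*int (c 6)*i5)) (((1))) mod int d" using e0 by (simp add: mod_eq_dvd_iff)
  have e1: "RC c (0) (0) ((int (c 5)^2*i2*i6)) - RC c (((-1)*int (c 6)*i5)) (((1))) ((int (c 5)^2*i2*i6)) = (int (c 5)^2*int (c 6)*i5*i6) * ((-1) + int (c 2)*i2) + (int (c 5)*int (c 6)*i6) * ((-1) + int (c 5)*i5) + (int (c 5)) * ((-1) + int (c 6)*i6)"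
    unfolding Rg_def zz by algebra
  have "int d dvd (int (c 5)^2*int (c 6)*i5*i6) * ((-1) + int (c 2)*i2) + (int (c 5)*int (c 6)*i6) * ((-1) + int (c 5)*i5) + (int (c 5)) * ((-1) + int (c 6)*i6)" by (rule dvd_add[OF dvd_add[OF dvd_mult[OF h(1)] dvd_mult[OF h(2)]] dvd_mult[OF h(3)]])
  then have f1: "RC c (0) (0) ((int (c 5)^2*i2*i6)) mod int d = RC c (((-1)*int (c 6)*i5)) (((1))) ((int (c 5)^2*i2*i6)) mod int d" using e1 by (simp add: mod_eq_dvd_iff)
  have e2: "RC c (0) ((int (c 5)^2*i2*i6)) (0) - RC c (((1))) ((int (c 5)^2*i2*i6)) (0) = 0"
    unfolding Rg_def zz by algebra
  have "int d dvd 0" by simp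
  then have f2: "RC c (0) ((int (c 5)^2*i2*i6)) (0) mod int d = RC c (((1))) ((int (c 5)^2*i2*i6)) (0) mod int d" using e2 by (simp add: mod_eq_dvd_iff)
  show ?thesis by (rule coll3[OF d f0 f1 f2 nd])
qed

lemma case_5c:
  fixes d :: nat and c :: "nat \<Rightarrow> nat" and i0 i1 i2 i3 i4 i5 i6 iK :: int
  assumes d: "d \<ge> 2"
    and z: "c 0 = 0" "c 1 = 0" "c 3 = 0" "c 4 = 0" "c 6 = 0"
    and h: "int d dvd ((-1) + int (c 2)*i2)"
    and nd: "((int (c 2))) mod int d \<noteq> (0) mod int d"
  shows "\<not> reversible d c 4"
proof -
  have zz: "int (c 0) = 0" "int (c 1) = 0" "int (c 3) = 0" "int (c 4) = 0" "int (c 6) = 0" using z by simp_all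
  have e0: "RC c (0) (((1))) ((int (c 2))) - RC c (0) (((1))) (0) = 0"
    unfolding Rg_def zz by algebra
  have "int d dvd 0" by simp
  then have f0: "RC c (0) (((1))) ((int (c 2))) mod int d = RC c (0) (((1))) (0) mod int d" using e0 by (simp add: mod_eq_dvd_iff)
  have e1: "RC c (((1))) ((int (c 2))) (((-1)*int (c 5))) - RC c (((1))) (0) (0) = 0"
    unfolding Rg_def zz by algebra
  have "int d dvd 0" by simp
  then have f1: "RC c (((1))) ((int (c 2))) (((-1)*int (c 5))) mod int d = RC c (((1))) (0) (0) mod int d" using e1 by (simp add: mod_eq_dvd_iff)
  have e2: "RC c ((int (c 2))) (((-1)*int (c 5))) ((int (c 5)^2*i2^2)) - RC c (0) (0) ((int (c 5)^2*i2^2)) = (int (c 5)^2 + int (c 2)*int (c 5)^2*i2) * ((-1) + int (c 2)*i2)"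
    unfolding Rg_def zz by algebra
  have "int d dvd (int (c 5)^2 + int (c 2)*int (c 5)^2*i2) * ((-1) + int (c 2)*i2)" by (rule dvd_mult[OF h(1)])
  then have f2: "RC c ((int (c 2))) (((-1)*int (c 5))) ((int (c 5)^2*i2^2)) mod int d = RC c (0) (0) ((int (c 5)^2*i2^2)) mod int d" using e2 by (simp add: mod_eq_dvd_iff)
  have e3: "RC c (((-1)*int (c 5))) ((int (c 5)^2*i2^2)) (0) - RC c (0) ((int (c 5)^2*i2^2)) (0) = 0"
    unfolding Rg_def zz by algebra
  have "int d dvd 0" by simp
  then have f3: "RC c (((-1)*int (c 5))) ((int (c 5)^2*i2^2)) (0) mod int d = RC c (0) ((int (c 5)^2*i2^2)) (0) mod int d" using e3 by (simp add: mod_eq_dvd_iff)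
  show ?thesis by (rule coll4[OF d f0 f1 f2 f3 nd])
qed




lemma int_range_dvd_eq:
  fixes a b D :: int
  assumes "0 \<le> a" "a < D" "0 \<le> b" "b < D" "D dvd a - b"
  shows "a = b"
proof (rule ccontr)
  assume "a \<noteq> b"
  then have "a - b \<noteq> 0" by simp
  then have "\<bar>D\<bar> \<le> \<bar>a - b\<bar>" using assms(5) dvd_imp_le_int by blast
  then show False using assms(1-4) by linarith
qed

lemma cancel_mod:
  fixes a b T C D :: int
  assumes "coprime C D" "(C * a + T) mod D = (C * b + T) mod D"
    "0 \<le> a" "a < D" "0 \<le> b" "b < D"
  shows "a = b"
proof -
  have "D dvd (C * a + T) - (C * b + T)" using assms(2) by (simp add: mod_eq_dvd_iff)
  then have "D dvd C * (a - b)" by (simp add: algebra_simps)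
  then have "D dvd a - b" using assms(1) by (metis coprime_commute coprime_dvd_mult_right_iff)
  then show ?thesis using int_range_dvd_eq assms(3-6) by blast
qed

lemma linear_collision:
  fixes d :: nat and c :: "nat \<Rightarrow> nat" and i6 :: int
  assumes d2: "d \<ge> 2" and pD: "prime (int d)"
    and z: "c 0 = 0" "c 1 = 0" "c 2 = 0" "c 3 = 0"
    and n4: "\<not> int d dvd int (c 4)" and h6: "int d dvd (-1) + int (c 6) * i6"
  shows "\<exists>n\<ge>1. \<not> reversible d c n"
proof -
  define D where "D = int d"
  define C4 where "C4 = int (c 4)"
  define C5 where "C5 = int (c 5)"
  define C6 where "C6 = int (c 6)"
  define C7 where "C7 = int (c 7)"
  have Dge: "D \<ge> 2" using d2 by (simp add: D_def)
  have ni6: "\<not> D dvd i6"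
  proof
    assume "D dvd i6"
    then have "D dvd int (c 6) * i6" by simp
    then have "D dvd int (c 6) * i6 - ((-1) + int (c 6) * i6)" using h6 unfolding D_def by (rule dvd_diff)
    then have "D dvd 1" by simp
    then show False using Dge by (simp add: zdvd_not_zless)
  qed
  define step :: "int \<times> int \<Rightarrow> int \<times> int" where
    "step = (\<lambda>(a, b). (b, (- (C4 * a + C5 * b) * i6) mod D))"
  define A where "A = {0..<D} \<times> {0..<D}"
  have finA: "finite A" unfolding A_def by simp
  have into: "step z \<in> A" if "z \<in> A" for z
    using that Dge unfolding A_def step_def by (auto split: prod.splits)
  have injs: "inj_on step A"
  proof (rule inj_onI)
    fix z w assume zA: "z \<in> A" and wA: "w \<in> A" and e: "step z = step w"
    obtain a b where zz: "z = (a, b)" by (cases z)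
    obtain a' b' where ww: "w = (a', b')" by (cases w)
    have bb: "b = b'" using e zz ww unfolding step_def by simp
    have "(- (C4 * a + C5 * b) * i6) mod D = (- (C4 * a' + C5 * b) * i6) mod D"
      using e zz ww bb unfolding step_def by simp
    then have "D dvd (- (C4 * a + C5 * b) * i6) - (- (C4 * a' + C5 * b) * i6)"
      by (simp add: mod_eq_dvd_iff)
    moreover have "(- (C4 * a + C5 * b) * i6) - (- (C4 * a' + C5 * b) * i6) = (C4 * i6) * (a' - a)"
      by (simp add: algebra_simps)
    ultimately have "D dvd (C4 * i6) * (a' - a)" by simp
    moreover have "\<not> D dvd C4 * i6" using n4 ni6 pD unfolding D_def C4_def
      by (simp add: prime_dvd_mult_iff)
    ultimately have "D dvd a' - a" using pD unfolding D_def by (simp add: prime_dvd_mult_iff)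
    then have "a' = a" using int_range_dvd_eq zA wA zz ww unfolding A_def by auto
    then show "z = w" using zz ww bb by simp
  qed
  define s where "s k = (step ^^ k) (0, 1)" for k
  have sSuc: "s (Suc k) = step (s k)" for k by (simp add: s_def)
  have sA: "s k \<in> A" for k
  proof (induction k)
    case 0 then show ?case using Dge by (simp add: s_def A_def)
  next
    case (Suc k) then show ?case using into sSuc by simp
  qed
  define N where "N = card A"
  have "\<not> inj_on s {0..N}"
  proof
    assume inj: "inj_on s {0..N}"
    have "card (s ` {0..N}) = Suc N" using card_image[OF inj] by simp
    moreover have "card (s ` {0..N}) \<le> N"
    proof -
      have "s ` {0..N} \<subseteq> A" using sA by auto
      then show ?thesis unfolding N_def by (rule card_mono[OF finA])
    qed
    ultimately show False by simp
  qed
  then obtain i j where ij: "i \<in> {0..N}" "j \<in> {0..N}" "i \<noteq> j" "s i = s j"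
    unfolding inj_on_def by blast
  have bk: "s i' = s j'" if "s (Suc i') = s (Suc j')" for i' j'
  proof -
    have "step (s i') = step (s j')" using that sSuc by simp
    then show ?thesis using inj_onD[OF injs _ sA sA] by blast
  qed
  have perd: "s 0 = s (j' - i')" if "s i' = s j'" "i' < j'" for i' j'
    using that
  proof (induction i' arbitrary: j')
    case 0 then show ?case by simp
  next
    case (Suc i')
    from Suc.prems(2) obtain j'' where j'': "j' = Suc j''" by (cases j') auto
    have "s i' = s j''" using bk[of i' j''] Suc.prems(1) j'' by simp
    moreover have "i' < j''" using Suc.prems(2) j'' by simp
    ultimately have "s 0 = s (j'' - i')" by (rule Suc.IH)
    then show ?case using j'' by simp
  qed
  obtain p where p: "p > 0" "s p = s 0"
  proof (cases "i < j")
    case True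
    have "s 0 = s (j - i)" using perd[of i j] ij True by simp
    then show ?thesis using that[of "j - i"] True by simp
  next
    case False then have "j < i" using ij by simp
    have "s 0 = s (i - j)" using perd[of j i] ij \<open>j < i\<close> by simp
    then show ?thesis using that[of "i - j"] \<open>j < i\<close> by simp
  qed
  have s0: "s 0 = (0, 1)" by (simp add: s_def)
  have s1: "fst (s 1) = 1" by (simp add: s_def step_def)
  have fst_step: "fst (s (Suc k)) = snd (s k)" for k
    by (simp add: sSuc step_def split: prod.splits)
  have snd_step: "snd (s (Suc k)) = (- (C4 * fst (s k) + C5 * snd (s k)) * i6) mod D" for k
    by (simp add: sSuc step_def split: prod.splits)
  have p1: "p \<noteq> 1" using p s0 s1 by auto
  define n where "n = p - 1"
  have n1: "n \<ge> 1" using p p1 unfolding n_def by simp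
  have pn: "p = Suc n" using p n1 unfolding n_def by simp
  define X where "X = map (\<lambda>k. snd (s k)) [0..<n]"
  define Y :: "int list" where "Y = replicate n 0"
  have lX: "length X = n" by (simp add: X_def)
  have extY: "ext Y j = 0" for j
    unfolding ext_def Y_def by (auto simp: nat_less_iff)
  have ex1: "ext X (int i - 1) = fst (s i)" if "i < n" for i
  proof (cases i)
    case 0 then show ?thesis using s0 by (simp add: ext_def)
  next
    case (Suc k) then show ?thesis using that fst_step by (simp add: ext_def X_def lX)
  qed
  have ex2: "ext X (int i) = snd (s i)" if "i < n" for i
    using that by (simp add: ext_def X_def)
  have ex3: "ext X (int i + 1) = snd (s (Suc i))" if "i < n" for i
  proof (cases "Suc i < n")
    case True
    have "nat (int i + 1) = Suc i" by simp
    then show ?thesis using True by (simp add: ext_def X_def)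
  next
    case False
    then have "Suc i = n" using that by simp
    then have "snd (s (Suc i)) = fst (s p)" using pn fst_step by simp
    also have "\<dots> = 0" using p s0 by simp
    finally show ?thesis using False by (simp add: ext_def X_def)
  qed
  have key: "RC c x y ((- (C4 * x + C5 * y) * i6) mod D) mod D = RC c 0 0 0 mod D" for x y
  proof -
    have "RC c x y ((- (C4 * x + C5 * y) * i6) mod D) mod D
        = (C4 * x + C5 * y + C6 * ((- (C4 * x + C5 * y) * i6) mod D) + C7) mod D"
      using z unfolding Rg_def C4_def C5_def C6_def C7_def by simp
    also have "\<dots> = (C4 * x + C5 * y + C6 * (- (C4 * x + C5 * y) * i6) + C7) mod D"
      by (intro mod_add_cong mod_mult_cong; simp)
    also have "\<dots> = ((- (C4 * x + C5 * y)) * ((-1) + C6 * i6) + C7) mod D"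
      by (simp add: algebra_simps)
    also have "\<dots> = C7 mod D"
    proof -
      have "D dvd (- (C4 * x + C5 * y)) * ((-1) + C6 * i6)"
        using h6 unfolding D_def C6_def by simp
      then show ?thesis by (simp add: mod_eq_dvd_iff)
    qed
    also have "\<dots> = RC c 0 0 0 mod D" unfolding Rg_def C7_def by simp
    finally show ?thesis .
  qed
  have eqs: "\<forall>i<length X. RC c (ext X (int i - 1)) (ext X (int i)) (ext X (int i + 1)) mod int d
                  = RC c (ext Y (int i - 1)) (ext Y (int i)) (ext Y (int i + 1)) mod int d"
  proof (intro allI impI)
    fix i assume "i < length X"
    then have i: "i < n" using lX by simp
    show "RC c (ext X (int i - 1)) (ext X (int i)) (ext X (int i + 1)) mod int d
                  = RC c (ext Y (int i - 1)) (ext Y (int i)) (ext Y (int i + 1)) mod int d"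
      using key[of "fst (s i)" "snd (s i)"] ex1[OF i] ex2[OF i] ex3[OF i] snd_step[of i] extY
      unfolding D_def by simp
  qed
  have lY: "length Y = length X" by (simp add: Y_def lX)
  have X0: "X ! 0 = 1" using n1 s0 by (simp add: X_def)
  have Y0: "Y ! 0 = 0" using n1 by (simp add: Y_def)
  have "\<not> reversible d c (length X)"
    using collision[OF d2 lY eqs, of 0] n1 lX X0 Y0 d2 by simp
  then show ?thesis using n1 lX by auto
qed

context
  fixes d :: nat and c :: "nat \<Rightarrow> nat"
  assumes pr: "prime d" and cb: "\<forall>i<8. c i < d" and H: "\<forall>n\<ge>1. reversible d c n"
begin

lemma d2: "d \<ge> 2" using pr prime_ge_2_nat by blast

lemma pD: "prime (int d)" using pr by simp

lemma ndvd: "k < 8 \<Longrightarrow> c k \<noteq> 0 \<Longrightarrow> \<not> int d dvd int (c k)"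
proof
  assume k: "k < 8" "c k \<noteq> 0" and "int d dvd int (c k)"
  then have "d dvd c k" by simp
  then have "d \<le> c k" using k by (simp add: dvd_imp_le)
  then show False using cb k by auto
qed

lemma invk: "k < 8 \<Longrightarrow> c k \<noteq> 0 \<Longrightarrow> \<exists>i. int d dvd (-1) + int (c k) * i"
  using inv_ex[OF pD ndvd] by (simp add: algebra_simps)

lemma inv_nd: "int d dvd (-1) + a * i \<Longrightarrow> \<not> int d dvd i"
proof
  assume h: "int d dvd (-1) + a * i" and "int d dvd i"
  then have "int d dvd a * i" by simp
  then have "int d dvd (a * i) - ((-1) + a * i)" using h by (rule dvd_diff)
  then have "int d dvd 1" by simp
  then show False using d2 by (simp add: zdvd_not_zless)
qed

lemma nd_mul: "\<not> int d dvd a \<Longrightarrow> \<not> int d dvd b \<Longrightarrow> \<not> int d dvd a * b"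
  using pD by (simp add: prime_dvd_mult_iff)

lemma one_ne: "x mod int d \<noteq> (1 + x) mod int d"
proof
  assume "x mod int d = (1 + x) mod int d"
  then have "int d dvd x - (1 + x)" by (simp add: mod_eq_dvd_iff)
  then have "int d dvd 1" by simp
  then show False using d2 by (simp add: zdvd_not_zless)
qed

lemma zero_ne: "\<not> int d dvd x \<Longrightarrow> 0 mod int d \<noteq> x mod int d"
  by (simp add: dvd_eq_mod_eq_0)

lemma c5nz: "c 5 \<noteq> 0"
proof
  assume c5: "c 5 = 0"
  have "RC c 0 0 0 mod int d = RC c 0 1 0 mod int d" using c5 by (simp add: Rg_def)
  moreover have "(0::int) mod int d \<noteq> 1 mod int d" using d2 by simp
  ultimately have "\<not> reversible d c 1" using coll1[OF d2] by blast
  then show False using H by simp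
qed

end





context
  fixes d :: nat and c :: "nat \<Rightarrow> nat"
  assumes pr: "prime d" and cb: "\<forall>i<8. c i < d" and H: "\<forall>n\<ge>1. reversible d c n"
begin

lemma c3z: "c 3 = 0"
proof (rule ccontr)
  assume c3: "c 3 \<noteq> 0"
  have d2: "d \<ge> 2" using d2[OF pr cb H] .
  obtain i3 where h3: "int d dvd (-1) + int (c 3) * i3" using invk[OF pr cb H, of 3] c3 by auto
  obtain i5 where h5: "int d dvd (-1) + int (c 5) * i5" using invk[OF pr cb H, of 5] c5nz[OF pr cb H] by auto
  have n5: "\<not> int d dvd int (c 5)" using ndvd[OF pr cb H, of 5] c5nz[OF pr cb H] by simp
  have n3: "\<not> int d dvd i3" using inv_nd[OF pr cb H h3] .
  have nt: "\<not> int d dvd (-1) * int (c 5) * i3"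
    using nd_mul[OF pr cb H n5 n3] by simp
  show False
  proof (cases "int d dvd (int (c 4) + (-1)*int (c 1)*int (c 5)*i3)")
    case True
    have "\<not> reversible d c 2"
      by (rule case_2a[OF d2 h3 True]) (use d2 in simp)
    then show False using H by simp
  next
    case False
    obtain iK where hK0: "int d dvd (int (c 4) + (-1)*int (c 1)*int (c 5)*i3) * iK - 1"
      using inv_ex[OF pD[OF pr cb H] False] by blast
    have eqK: "(int (c 4) + (-1)*int (c 1)*int (c 5)*i3) * iK - 1 = (-1) + int (c 4)*iK + (-1)*int (c 1)*int (c 5)*i3*iK"
      by algebra
    from hK0 have hK: "int d dvd (-1) + int (c 4)*iK + (-1)*int (c 1)*int (c 5)*i3*iK" by (simp only: eqK)
    have "\<not> reversible d c 2"
      by (rule case_2b[OF d2 h3 h5 hK]) (use zero_ne[OF pr cb H nt] in simp)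
    then show False using H by simp
  qed
qed

lemma one_ne': "b - a = 1 \<Longrightarrow> a mod int d \<noteq> b mod int d"
  using one_ne[OF pr cb H, of a] by (simp add: algebra_simps)

lemma c1z: "c 1 = 0"
proof (rule ccontr)
  assume c1: "c 1 \<noteq> 0"
  have d2: "d \<ge> 2" using d2[OF pr cb H] .
  obtain i1 where h1: "int d dvd (-1) + int (c 1) * i1" using invk[OF pr cb H, of 1] c1 by auto
  obtain i5 where h5: "int d dvd (-1) + int (c 5) * i5" using invk[OF pr cb H, of 5] c5nz[OF pr cb H] by auto
  have n5: "\<not> int d dvd int (c 5)" using ndvd[OF pr cb H, of 5] c5nz[OF pr cb H] by simp
  have n1: "\<not> int d dvd i1" using inv_nd[OF pr cb H h1] .
  have nt: "\<not> int d dvd (-1) * int (c 5) * i1"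
    using nd_mul[OF pr cb H n5 n1] by simp
  show False
  proof (cases "c 6 = 0")
    case True
    have "\<not> reversible d c 2"
      by (rule case_3a[OF d2 c3z True h1]) (use d2 in simp)
    then show False using H by simp
  next
    case False
    obtain i6 where h6: "int d dvd (-1) + int (c 6) * i6" using invk[OF pr cb H, of 6] False by auto
    have "\<not> reversible d c 2"
      by (rule case_3b[OF d2 c3z h1 h5 h6]) (use zero_ne[OF pr cb H nt] in simp)
    then show False using H by simp
  qed
qed

lemma c0z: "c 0 = 0"
proof (rule ccontr)
  assume c0: "c 0 \<noteq> 0"
  have d2: "d \<ge> 2" using d2[OF pr cb H] .
  obtain i0 where h0: "int d dvd (-1) + int (c 0) * i0" using invk[OF pr cb H, of 0] c0 by auto
  obtain i5 where h5: "int d dvd (-1) + int (c 5) * i5" using invk[OF pr cb H, of 5] c5nz[OF pr cb H] by auto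
  show False
  proof (cases "c 4 = 0")
    case True
    have "\<not> reversible d c 3"
      by (rule case_4b[OF d2 c1z c3z True h0 h5]) (rule one_ne', algebra)
    then show False using H by simp
  next
    case c4: False
    show False
    proof (cases "c 6 = 0")
      case True
      have "\<not> reversible d c 3"
        by (rule case_4c[OF d2 c1z c3z True h0 h5]) (rule one_ne', algebra)
      then show False using H by simp
    next
      case False
      obtain i4 where h4: "int d dvd (-1) + int (c 4) * i4" using invk[OF pr cb H, of 4] c4 by auto
      obtain i6 where h6: "int d dvd (-1) + int (c 6) * i6" using invk[OF pr cb H, of 6] False by auto
      have "\<not> reversible d c 3"
        by (rule case_4a[OF d2 c1z c3z h0 h4 h5 h6]) (rule one_ne', algebra)
      then show False using H by simp
    qed
  qed
qed

lemma c2z: "c 2 = 0"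
proof (rule ccontr)
  assume c2: "c 2 \<noteq> 0"
  have d2: "d \<ge> 2" using d2[OF pr cb H] .
  obtain i2 where h2: "int d dvd (-1) + int (c 2) * i2" using invk[OF pr cb H, of 2] c2 by auto
  obtain i5 where h5: "int d dvd (-1) + int (c 5) * i5" using invk[OF pr cb H, of 5] c5nz[OF pr cb H] by auto
  show False
  proof (cases "c 4 = 0")
    case c4: False
    obtain i4 where h4: "int d dvd (-1) + int (c 4) * i4" using invk[OF pr cb H, of 4] c4 by auto
    have "\<not> reversible d c 3"
      by (rule case_5a[OF d2 c0z c1z c3z h2 h4 h5]) (use d2 in simp)
    then show False using H by simp
  next
    case c4: True
    show False
    proof (cases "c 6 = 0")
      case True
      have n2: "\<not> int d dvd int (c 2)" using ndvd[OF pr cb H, of 2] c2 by simp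
      have "\<not> reversible d c 4"
        by (rule case_5c[OF d2 c0z c1z c3z c4 True h2]) (use zero_ne[OF pr cb H n2] in metis)
      then show False using H by simp
    next
      case False
      obtain i6 where h6: "int d dvd (-1) + int (c 6) * i6" using invk[OF pr cb H, of 6] False by auto
      have "\<not> reversible d c 3"
        by (rule case_5b[OF d2 c0z c1z c3z c4 h2 h5 h6]) (use d2 in simp)
      then show False using H by simp
    qed
  qed
qed

lemma c46: "c 4 = 0 \<or> c 6 = 0"
proof (rule ccontr)
  assume "\<not> (c 4 = 0 \<or> c 6 = 0)"
  then have c4: "c 4 \<noteq> 0" and c6: "c 6 \<noteq> 0" by auto
  have n4: "\<not> int d dvd int (c 4)" using ndvd[OF pr cb H, of 4] c4 by simp
  obtain i6 where h6: "int d dvd (-1) + int (c 6) * i6" using invk[OF pr cb H, of 6] c6 by auto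
  have "\<exists>n\<ge>1. \<not> reversible d c n"
    by (rule linear_collision[OF d2[OF pr cb H] pD[OF pr cb H] c0z c1z c2z c3z n4 h6])
  then show False using H by auto
qed

end

lemma configs_finite: "finite (configs d n)"
proof -
  have "configs d n \<subseteq> {xs. set xs \<subseteq> {..<d} \<and> length xs = n}"
    unfolding configs_def by (auto simp: in_set_conv_nth)
  moreover have "finite {xs. set xs \<subseteq> {..<d} \<and> length xs = n}"
    by (rule finite_lists_length_eq) simp
  ultimately show ?thesis by (rule finite_subset)
qed

lemma sufficiency:
  fixes d :: nat and c :: "nat \<Rightarrow> nat"
  assumes pr: "prime d"
    and z: "c 0 = 0" "c 1 = 0" "c 2 = 0" "c 3 = 0" and c46: "c 4 = 0 \<or> c 6 = 0"
    and g: "gcd (c 5) d = 1"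
  shows "reversible d c n"
proof -
  have dpos: "d > 0" using pr prime_gt_0_nat by blast
  define D where "D = int d"
  have Dpos: "D > 0" using dpos by (simp add: D_def)
  have cop: "coprime (int (c 5)) D" using g unfolding D_def
    by (simp add: coprime_iff_gcd_eq_1 gcd_int_def)
  have lenG: "length (global_map d c xs) = length xs" for xs
    by (simp add: global_map_def)
  have mapsto: "global_map d c ` configs d n \<subseteq> configs d n"
    unfolding configs_def using dpos by (auto simp: lenG global_map_def fdca_rule_def)
  have G_int: "int (global_map d c xs ! i) =
      (int (c 4) * int (cell xs (int i - 1)) + int (c 5) * int (cell xs (int i))
       + int (c 6) * int (cell xs (int i + 1)) + int (c 7)) mod D" if "i < length xs" for xs i
    using that z unfolding global_map_def D_def by (simp add: fdca_int Rg_def)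
  have cell_in: "cell xs (int i) = xs ! i" if "i < length xs" for xs i
    using that by (simp add: cell_def)
  have cell_rng: "0 \<le> int (cell xs j) \<and> int (cell xs j) < D" if "xs \<in> configs d n" for xs j
    using that dpos unfolding configs_def cell_def D_def by (auto simp: nat_less_iff)
  have inj: "inj_on (global_map d c) (configs d n)"
  proof (rule inj_onI)
    fix xs ys assume xs: "xs \<in> configs d n" and ys: "ys \<in> configs d n"
      and e: "global_map d c xs = global_map d c ys"
    have lx: "length xs = n" and ly: "length ys = n" using xs ys by (auto simp: configs_def)
    have out: "(int (c 4) * int (cell xs (int i - 1)) + int (c 5) * int (xs ! i)
       + int (c 6) * int (cell xs (int i + 1)) + int (c 7)) mod D
       = (int (c 4) * int (cell ys (int i - 1)) + int (c 5) * int (ys ! i)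
       + int (c 6) * int (cell ys (int i + 1)) + int (c 7)) mod D" if "i < n" for i
      using G_int[of i xs] G_int[of i ys] e that lx ly cell_in[of i xs] cell_in[of i ys] by simp
    have rngx: "0 \<le> int (xs ! i) \<and> int (xs ! i) < D" if "i < n" for i
      using cell_rng[OF xs, of "int i"] cell_in[of i xs] that lx by simp
    have rngy: "0 \<le> int (ys ! i) \<and> int (ys ! i) < D" if "i < n" for i
      using cell_rng[OF ys, of "int i"] cell_in[of i ys] that ly by simp
    have allEq: "\<forall>i<n. xs ! i = ys ! i"
    proof (cases "c 6 = 0")
      case c6: True
      have "\<forall>j<k. xs ! j = ys ! j" if "k \<le> n" for k
        using that
      proof (induction k)
        case 0 then show ?case by simp
      next
        case (Suc k)
        then have IH: "\<forall>j<k. xs ! j = ys ! j" and k: "k < n" by auto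
        have cl: "cell xs (int k - 1) = cell ys (int k - 1)"
        proof (cases k)
          case 0 then show ?thesis by (simp add: cell_def)
        next
          case (Suc k')
          then have "int k - 1 = int k'" by simp
          then show ?thesis using IH Suc k lx ly by (simp add: cell_def)
        qed
        have "(int (c 5) * int (xs ! k) + (int (c 4) * int (cell xs (int k - 1)) + int (c 7))) mod D
            = (int (c 5) * int (ys ! k) + (int (c 4) * int (cell xs (int k - 1)) + int (c 7))) mod D"
          using out[OF k] c6 cl by (simp add: algebra_simps)
        then have "int (xs ! k) = int (ys ! k)"
          using cancel_mod[OF cop] rngx[OF k] rngy[OF k] by blast
        then show ?case using IH by (simp add: less_Suc_eq)
      qed
      from this[of n] show ?thesis by simp
    next
      case c6: False
      then have c4: "c 4 = 0" using c46 by simp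
      have "\<forall>j. n - m \<le> j \<and> j < n \<longrightarrow> xs ! j = ys ! j" if "m \<le> n" for m
        using that
      proof (induction m)
        case 0 then show ?case by simp
      next
        case (Suc m)
        then have IH: "\<forall>j. n - m \<le> j \<and> j < n \<longrightarrow> xs ! j = ys ! j" and m: "m < n" by auto
        define k where "k = n - Suc m"
        have k: "k < n" and kk: "Suc k = n - m" using m by (auto simp: k_def)
        have cl: "cell xs (int k + 1) = cell ys (int k + 1)"
        proof (cases "Suc k < n")
          case True
          have "nat (int k + 1) = Suc k" by simp
          then show ?thesis using IH True kk lx ly by (simp add: cell_def)
        next
          case False then show ?thesis using lx ly by (simp add: cell_def)
        qed
        have "(int (c 5) * int (xs ! k) + (int (c 6) * int (cell xs (int k + 1)) + int (c 7))) mod D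
            = (int (c 5) * int (ys ! k) + (int (c 6) * int (cell xs (int k + 1)) + int (c 7))) mod D"
          using out[OF k] c4 cl by (simp add: algebra_simps)
        then have "int (xs ! k) = int (ys ! k)"
          using cancel_mod[OF cop] rngx[OF k] rngy[OF k] by blast
        then have "xs ! k = ys ! k" by simp
        show ?case
        proof (intro allI impI)
          fix j assume j: "n - Suc m \<le> j \<and> j < n"
          show "xs ! j = ys ! j"
          proof (cases "j = k")
            case True then show ?thesis using \<open>xs ! k = ys ! k\<close> by simp
          next
            case False
            then have "n - m \<le> j" using j kk unfolding k_def by linarith
            then show ?thesis using IH j by blast
          qed
        qed
      qed
      from this[of n] show ?thesis by simp
    qed
    then show "xs = ys" using lx ly by (simp add: nth_equalityI)
  qed
  have "global_map d c ` configs d n = configs d n"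
    by (rule endo_inj_surj[OF configs_finite mapsto inj])
  then show ?thesis unfolding reversible_def bij_betw_def using inj by simp
qed

theorem corollary1:
  fixes d :: nat and c :: "nat \<Rightarrow> nat"
  assumes "prime d"
    and "\<forall>i<8. c i < d"
  shows "(\<forall>n\<ge>1. reversible d c n) \<longleftrightarrow>
         (c 0 = 0 \<and> c 1 = 0 \<and> c 2 = 0 \<and> c 3 = 0 \<and> (c 4 = 0 \<or> c 6 = 0)
          \<and> gcd (c 5) d = 1)"
proof
  assume H: "\<forall>n\<ge>1. reversible d c n"
  have n5: "\<not> int d dvd int (c 5)" using ndvd[OF assms H, of 5] c5nz[OF assms H] by simp
  have "\<not> d dvd c 5" using n5 by simp
  then have "coprime d (c 5)" using prime_imp_coprime[OF assms(1)] by blast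
  then have g: "gcd (c 5) d = 1" by (simp add: coprime_iff_gcd_eq_1 gcd.commute)
  have a0: "c 0 = 0" by (rule c0z[OF assms H])
  have a1: "c 1 = 0" by (rule c1z[OF assms H])
  have a2: "c 2 = 0" by (rule c2z[OF assms H])
  have a3: "c 3 = 0" by (rule c3z[OF assms H])
  have a46: "c 4 = 0 \<or> c 6 = 0" by (rule c46[OF assms H])
  show "c 0 = 0 \<and> c 1 = 0 \<and> c 2 = 0 \<and> c 3 = 0 \<and> (c 4 = 0 \<or> c 6 = 0) \<and> gcd (c 5) d = 1"
    using a0 a1 a2 a3 a46 g by blast
next
  assume A: "c 0 = 0 \<and> c 1 = 0 \<and> c 2 = 0 \<and> c 3 = 0 \<and> (c 4 = 0 \<or> c 6 = 0) \<and> gcd (c 5) d = 1"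
  show "\<forall>n\<ge>1. reversible d c n"
  proof (intro allI impI)
    fix n :: nat
    have a0: "c 0 = 0" and a1: "c 1 = 0" and a2: "c 2 = 0" and a3: "c 3 = 0"
      and a46: "c 4 = 0 \<or> c 6 = 0" and g: "gcd (c 5) d = 1" using A by auto
    show "reversible d c n" by (rule sufficiency[OF assms(1) a0 a1 a2 a3 a46 g])
  qed
qed

end
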